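(* Let $G$ be a (Hausdorff) topological group. Then: (1) $G$ is a cosmic space if and only if $G$ is separable and has countable $cn$-character; (2) $G$ is an $\aleph_0$-space if and only if $G$ is separable and has countable $ck$-character; (3) $G$ is a $\mathcal{P}_0$-space if and only if $G$ is separable and has countable $cp$-character.
   Context: All spaces are Hausdorff. A family $\mathcal{N}$ of subsets of a space $X$ is a network if whenever $x\in U$ with $U$ open, $x\in N\subseteq U$ for some $N\in\mathcal{N}$; it is a $k$-network if whenever $K\subseteq U$ with $K$ compact and $U$ open, $K\subseteq\bigcup\mathcal{F}\subseteq U$ for some finite $\mathcal{F}\subseteq\mathcal{N}$. A space is cosmic if it is regular with a countable network, and an $\aleph_0$-space if it is regular with a countable $k$-network. Let $x\in X$. A family $\mathcal{N}$ of subsets of $X$ is: - a $cn$-network at $x$ if for each neighborhood $O_x$ of $x$ the set $\bigcup\{N\in\mathcal{N}: x\in N\subseteq O_x\}$ is a neighborhood of $x$; - a $ck$-network at $x$ if for every neighborhood $O_x$ of $x$ there is a neighborhood $U_x$ of $x$ such that for each compact $K\subseteq U_x$ there is a finite $\mathcal{F}\subseteq\mathcal{N}$ with $x\in\bigcap\mathcal{F}$ and $K\subseteq\bigcup\mathcal{F}\subseteq O_x$; - a $cp$-network at $x$ if for every neighborhood $O_x$ of $x$ there is $N\in\mathcal{N}$ with $x\in N\subseteq O_x$, and for every $A\subseteq X$ with $x\in\overline{A}\setminus A$ and every neighborhood $O_x$ of $x$ there is $N\in\mathcal{N}$ with $x\in N\subseteq O_x$ and $N\cap A$ infinite. A family is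 a $cn$-, $ck$-, $cp$-network in $X$ if it is one at every point of $X$. For $\mathfrak{n}\in\{cn,ck,cp\}$, the $\mathfrak{n}$-character of $X$ at $x$ is the least cardinality of an $\mathfrak{n}$-network at $x$, and the $\mathfrak{n}$-character of $X$ is the supremum over $x\in X$. A $\mathcal{P}_0$-space is a regular space admitting a countable $cp$-network (a countable family which is a $cp$-network at every point). *)

theory Defs
  imports "HOL-Analysis.Analysis"
begin

text \<open>All notions below are for the (type-class) topology on the type 'a; the space is UNIV.
  Hausdorffness is imposed by the class t2_space in the theorem.\<close>

definition nbhd :: "'a::topological_space set \<Rightarrow> 'a \<Rightarrow> bool" where
  "nbhd O' x \<longleftrightarrow> x \<in> interior O'"

definition is_network :: "'a::topological_space set set \<Rightarrow> bool" where
  "is_network \<N> \<longleftrightarrow> (\<forall>x U. open U \<and> x \<in> U \<longrightarrow> (\<exists>N\<in>\<N>. x \<in> N \<and> N \<subseteq> U))"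

definition is_k_network :: "'a::topological_space set set \<Rightarrow> bool" where
  "is_k_network \<N> \<longleftrightarrow> (\<forall>K U. compact K \<and> open U \<and> K \<subseteq> U \<longrightarrow>
      (\<exists>\<F>. finite \<F> \<and> \<F> \<subseteq> \<N> \<and> K \<subseteq> \<Union>\<F> \<and> \<Union>\<F> \<subseteq> U))"

definition cosmic :: "'a::topological_space itself \<Rightarrow> bool" where
  "cosmic _ \<longleftrightarrow> regular_space (euclidean :: 'a topology) \<and>
     (\<exists>\<N> :: 'a set set. countable \<N> \<and> is_network \<N>)"

definition aleph0_space :: "'a::topological_space itself \<Rightarrow> bool" where
  "aleph0_space _ \<longleftrightarrow> regular_space (euclidean :: 'a topology) \<and>
     (\<exists>\<N> :: 'a set set. countable \<N> \<and> is_k_network \<N>)"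

definition cn_network_at :: "'a::topological_space set set \<Rightarrow> 'a \<Rightarrow> bool" where
  "cn_network_at \<N> x \<longleftrightarrow> (\<forall>O'. nbhd O' x \<longrightarrow> nbhd (\<Union>{N\<in>\<N>. x \<in> N \<and> N \<subseteq> O'}) x)"

definition ck_network_at :: "'a::topological_space set set \<Rightarrow> 'a \<Rightarrow> bool" where
  "ck_network_at \<N> x \<longleftrightarrow> (\<forall>O'. nbhd O' x \<longrightarrow> (\<exists>U. nbhd U x \<and>
      (\<forall>K. compact K \<and> K \<subseteq> U \<longrightarrow>
        (\<exists>\<F>. finite \<F> \<and> \<F> \<subseteq> \<N> \<and> x \<in> \<Inter>\<F> \<and> K \<subseteq> \<Union>\<F> \<and> \<Union>\<F> \<subseteq> O'))))"

definition cp_network_at :: "'a::topological_space set set \<Rightarrow> 'a \<Rightarrow> bool" where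
  "cp_network_at \<N> x \<longleftrightarrow>
     (\<forall>O'. nbhd O' x \<longrightarrow> (\<exists>N\<in>\<N>. x \<in> N \<and> N \<subseteq> O')) \<and>
     (\<forall>A O'. x \<in> closure A - A \<and> nbhd O' x \<longrightarrow>
        (\<exists>N\<in>\<N>. x \<in> N \<and> N \<subseteq> O' \<and> infinite (N \<inter> A)))"

text \<open>Countable n-character: the supremum over x of the least cardinality of an
  n-network at x is at most aleph_0, i.e. every point has a countable n-network at it.\<close>

definition countable_cn_character :: "'a::topological_space itself \<Rightarrow> bool" where
  "countable_cn_character _ \<longleftrightarrow> (\<forall>x::'a. \<exists>\<N>. countable \<N> \<and> cn_network_at \<N> x)"

definition countable_ck_character :: "'a::topological_space itself \<Rightarrow> bool" where
  "countable_ck_character _ \<longleftrightarrow> (\<forall>x::'a. \<exists>\<N>. countable \<N> \<and> ck_network_at \<N> x)"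

definition countable_cp_character :: "'a::topological_space itself \<Rightarrow> bool" where
  "countable_cp_character _ \<longleftrightarrow> (\<forall>x::'a. \<exists>\<N>. countable \<N> \<and> cp_network_at \<N> x)"

definition P0_space :: "'a::topological_space itself \<Rightarrow> bool" where
  "P0_space _ \<longleftrightarrow> regular_space (euclidean :: 'a topology) \<and>
     (\<exists>\<N> :: 'a set set. countable \<N> \<and> (\<forall>x. cp_network_at \<N> x))"

end

theory Submission
  imports Defs
begin


lemma small2:
  assumes "open U" "(0::'a::topological_group_add) \<in> U"
  shows "\<exists>V. open V \<and> 0 \<in> V \<and> (\<forall>a\<in>V. \<forall>b\<in>V. a + b \<in> U)"
proof -
  have "LIM x (nhds 0 \<times>\<^sub>F nhds 0). fst x + snd x :> nhds (0 + (0::'a))"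
    by (rule tendsto_add_Pair)
  hence "((\<lambda>x. fst x + snd x) \<longlongrightarrow> (0::'a)) (nhds 0 \<times>\<^sub>F nhds 0)" by simp
  hence "eventually (\<lambda>x. fst x + snd x \<in> U) (nhds 0 \<times>\<^sub>F nhds (0::'a))"
    using assms by (rule topological_tendstoD)
  then obtain Q where Q: "eventually Q (nhds (0::'a))" "\<And>x y. Q x \<Longrightarrow> Q y \<Longrightarrow> x + y \<in> U"
    unfolding eventually_prod_same by force
  obtain S where S: "open S" "0 \<in> S" "\<And>x. x\<in>S \<Longrightarrow> Q x" using Q(1) unfolding eventually_nhds by metis
  show ?thesis
    apply (rule exI[of _ S]) using S Q(2) by simp
qed
lemma ovim: "continuous_on UNIV f \<Longrightarrow> open B \<Longrightarrow> open (f -` B)"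
  using continuous_on_open_vimage[of UNIV f] by auto

lemma open_tr1: "open B \<Longrightarrow> open {z. (a::'a::topological_group_add) + z \<in> B}"
proof -
  assume "open B"
  have "continuous_on UNIV (\<lambda>z. a + z)" by (intro continuous_intros)
  from ovim[OF this \<open>open B\<close>] show ?thesis by (simp add: vimage_def)
qed

lemma open_tr2: "open B \<Longrightarrow> open {z. - (z::'a::topological_group_add) + a \<in> B}"
proof -
  assume "open B"
  have "continuous_on UNIV (\<lambda>z. - z + a)" by (intro continuous_intros)
  from ovim[OF this \<open>open B\<close>] show ?thesis by (simp add: vimage_def)
qed

lemma open_neg: "open B \<Longrightarrow> open {z. - (z::'a::topological_group_add) \<in> B}"
proof -
  assume "open B"
  have "continuous_on UNIV (\<lambda>z::'a. - z)" by (intro continuous_intros)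
  from ovim[OF this \<open>open B\<close>] show ?thesis by (simp add: vimage_def)
qed

lemma small:
  assumes "open U" "(0::'a::topological_group_add) \<in> U"
  shows "\<exists>V. open V \<and> 0 \<in> V \<and> (\<forall>a\<in>V. - a \<in> V) \<and>
     (\<forall>a\<in>V. \<forall>b\<in>V. \<forall>c\<in>V. \<forall>d\<in>V. a + b + c + d \<in> U)"
proof -
  obtain V1 where V1: "open V1" "0 \<in> V1" "\<forall>a\<in>V1. \<forall>b\<in>V1. a + b \<in> U" using small2[OF assms] by blast
  obtain V2 where V2: "open V2" "0 \<in> V2" "\<forall>a\<in>V2. \<forall>b\<in>V2. a + b \<in> V1" using small2[OF V1(1,2)] by blast
  define V where "V = V2 \<inter> {z. - z \<in> V2}"
  have "open V" unfolding V_def using V2(1) open_neg by blast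
  moreover have "0 \<in> V" using V2 by (simp add: V_def)
  moreover have "\<forall>a\<in>V. - a \<in> V" by (auto simp: V_def)
  moreover have "\<forall>a\<in>V. \<forall>b\<in>V. \<forall>c\<in>V. \<forall>d\<in>V. a + b + c + d \<in> U"
  proof (intro ballI)
    fix a b c d assume "a \<in> V" "b \<in> V" "c \<in> V" "d \<in> V"
    hence "a + b \<in> V1" "c + d \<in> V1" using V2(3) unfolding V_def by blast+
    hence "(a + b) + (c + d) \<in> U" using V1(3) by blast
    thus "a + b + c + d \<in> U" by (simp add: add.assoc)
  qed
  ultimately show ?thesis by blast
qed

lemma closure_char: "x \<in> closure S \<longleftrightarrow> (\<forall>T. open T \<longrightarrow> x \<in> T \<longrightarrow> T \<inter> S \<noteq> {})"
  unfolding closure_iff_nhds_not_empty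
proof safe
  fix T assume "\<forall>A. \<forall>Sa\<subseteq>A. open Sa \<longrightarrow> x \<in> Sa \<longrightarrow> S \<inter> A \<noteq> {}" "open T" "x \<in> T" "T \<inter> S = {}"
  thus False by (metis inf_commute order_refl)
next
  fix A Sa assume "\<forall>T. open T \<longrightarrow> x \<in> T \<longrightarrow> T \<inter> S \<noteq> {}" "Sa \<subseteq> A" "open Sa" "x \<in> Sa" "S \<inter> A = {}"
  thus False by blast
qed


lemma nbhd_open: "open U \<Longrightarrow> x \<in> U \<Longrightarrow> nbhd U x"
  by (simp add: nbhd_def interior_open)

lemma nbhdE: "nbhd O' x \<Longrightarrow> (\<And>U. open U \<Longrightarrow> x \<in> U \<Longrightarrow> U \<subseteq> O' \<Longrightarrow> P) \<Longrightarrow> P"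
  unfolding nbhd_def by (meson interior_subset open_interior)

lemma regular_group: "regular_space (euclidean :: 'a::topological_group_add topology)"
  unfolding regular_space_def
proof (intro allI impI)
  fix C and a :: 'a
  assume H: "closedin euclidean C \<and> a \<in> topspace euclidean - C"
  hence "closed C" "a \<notin> C" by simp_all
  define U' where "U' = {v. a + v \<in> - C}"
  have "open U'" unfolding U'_def by (rule open_tr1) (use \<open>closed C\<close> in \<open>simp add: open_Compl\<close>)
  moreover have "0 \<in> U'" using \<open>a \<notin> C\<close> by (simp add: U'_def)
  ultimately obtain V where V: "open V" "0 \<in> V" "\<forall>a\<in>V. - a \<in> V"
     "\<forall>a\<in>V. \<forall>b\<in>V. \<forall>c\<in>V. \<forall>d\<in>V. a + b + c + d \<in> U'" using small by metis
  define U where "U = {z. - a + z \<in> V}"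
  have oU: "open U" unfolding U_def using open_tr1 V(1) by blast
  have aU: "a \<in> U" using V(2) by (simp add: U_def)
  have cl: "closure U \<inter> C = {}"
  proof (rule ccontr)
    assume "closure U \<inter> C \<noteq> {}"
    then obtain y where y: "y \<in> closure U" "y \<in> C" by auto
    have "open {z. - y + z \<in> V}" using open_tr1 V(1) by blast
    moreover have "y \<in> {z. - y + z \<in> V}" using V(2) by simp
    ultimately have "{z. - y + z \<in> V} \<inter> U \<noteq> {}"
      using y(1) unfolding closure_char by blast
    then obtain z where z: "- y + z \<in> V" "- a + z \<in> V" unfolding U_def by blast
    define w where "w = - a + z"
    define v where "v = - y + z"
    have "y = a + (w + - v)" unfolding w_def v_def by (simp add: minus_add add.assoc)
    moreover have "w \<in> V" "- v \<in> V" using V(3) z unfolding w_def v_def by auto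
    hence "w + - v + 0 + 0 \<in> U'" using V(2,4) by blast
    ultimately have "y \<in> - C" unfolding U'_def by simp
    thus False using y by simp
  qed
  have "C \<subseteq> - closure U" using cl by blast
  moreover have "disjnt U (- closure U)" using closure_subset[of U] by (auto simp: disjnt_def)
  moreover have "openin euclidean (- closure U)" by (simp add: open_Compl)
  ultimately show "\<exists>U V. openin euclidean U \<and> openin euclidean V \<and> a \<in> U \<and> C \<subseteq> V \<and> disjnt U V"
    using oU aU by (metis open_openin)
qed


lemma sep_of_network:
  assumes "countable \<N>" "is_network (\<N>::'a::topological_space set set)"
  shows "separable_space (euclidean :: 'a topology)"
proof -
  define C where "C = (\<lambda>N. SOME x. x \<in> N) ` {N\<in>\<N>. N \<noteq> {}}"
  have "countable C" unfolding C_def using assms(1) by simp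
  moreover have "closure C = UNIV"
  proof -
    { fix y :: 'a
      have "y \<in> closure C" unfolding closure_char
      proof (intro allI impI)
        fix T assume "open T" "y \<in> T"
        then obtain N where N: "N \<in> \<N>" "y \<in> N" "N \<subseteq> T" using assms(2) unfolding is_network_def by blast
        have s: "(SOME x. x \<in> N) \<in> N" using N(2) by (rule someI)
        have "(SOME x. x \<in> N) \<in> C" unfolding C_def using N by blast
        moreover have "(SOME x. x \<in> N) \<in> T" using s N(3) by blast
        ultimately show "T \<inter> C \<noteq> {}" by blast
      qed }
    thus ?thesis by blast
  qed
  ultimately show ?thesis unfolding separable_space_def by (simp only: euclidean_closure_of topspace_euclidean) blast
qed


lemma sepE:
  assumes "separable_space (euclidean :: 'a::topological_space topology)"
  shows "\<exists>D::'a set. countable D \<and> (\<forall>T. open T \<longrightarrow> T \<noteq> {} \<longrightarrow> T \<inter> D \<noteq> {})"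
proof -
  have "\<exists>C::'a set. countable C \<and> closure C = UNIV"
    using assms unfolding separable_space_def by (simp only: euclidean_closure_of topspace_euclidean) blast
  then obtain D :: "'a set" where D: "countable D" "closure D = UNIV" by blast
  have *: "T \<inter> D \<noteq> {}" if "open T" "T \<noteq> {}" for T
  proof -
    obtain y where "y \<in> T" using \<open>T \<noteq> {}\<close> by blast
    have "y \<in> closure D" using D by simp
    thus "T \<inter> D \<noteq> {}" using \<open>open T\<close> \<open>y \<in> T\<close> unfolding closure_char by blast
  qed
  show ?thesis using D(1) * by blast
qed



lemma nbhd_sub: "open U \<Longrightarrow> x \<in> U \<Longrightarrow> U \<subseteq> S \<Longrightarrow> nbhd S x"
  unfolding nbhd_def using interior_maximal by blast

lemma alg1: "x + (- (- d + x) + n + 0 + 0) = d + (n::'a::group_add)"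
  by (simp add: minus_add add.assoc)

lemma alg2: "d + (- d + x) = (x::'a::group_add)"
  by (simp add: add.assoc[symmetric])

lemma cosmic_fwd:
  assumes "cosmic TYPE('a::topological_space)"
  shows "separable_space (euclidean :: 'a topology) \<and> countable_cn_character TYPE('a)"
proof -
  obtain \<N> :: "'a set set" where N: "countable \<N>" "is_network \<N>"
    using assms unfolding cosmic_def by blast
  have "countable_cn_character TYPE('a)"
    unfolding countable_cn_character_def
  proof
    fix x :: 'a
    define \<M> where "\<M> = insert x ` \<N>"
    have "countable \<M>" unfolding \<M>_def using N(1) by simp
    moreover have "cn_network_at \<M> x" unfolding cn_network_at_def
    proof (intro allI impI)
      fix O' assume "nbhd O' x"
      then obtain U where U: "open U" "x \<in> U" "U \<subseteq> O'" by (rule nbhdE)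
      have "U \<subseteq> \<Union>{N \<in> \<M>. x \<in> N \<and> N \<subseteq> O'}"
      proof
        fix y assume "y \<in> U"
        then obtain N where "N \<in> \<N>" "y \<in> N" "N \<subseteq> U" using N(2) U(1) unfolding is_network_def by blast
        hence "insert x N \<in> {N \<in> \<M>. x \<in> N \<and> N \<subseteq> O'}" "y \<in> insert x N"
          using U unfolding \<M>_def by auto
        thus "y \<in> \<Union>{N \<in> \<M>. x \<in> N \<and> N \<subseteq> O'}" by blast
      qed
      thus "nbhd (\<Union>{N \<in> \<M>. x \<in> N \<and> N \<subseteq> O'}) x" using nbhd_sub U by blast
    qed
    ultimately show "\<exists>\<M>. countable \<M> \<and> cn_network_at \<M> x" by blast
  qed
  thus ?thesis using sep_of_network N by blast
qed

lemma cosmic_bwd: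
  assumes "separable_space (euclidean :: 'a::topological_group_add topology)"
    and "countable_cn_character TYPE('a)"
  shows "cosmic TYPE('a)"
proof -
  obtain D :: "'a set" where D: "countable D" "\<And>T. open T \<Longrightarrow> T \<noteq> {} \<Longrightarrow> T \<inter> D \<noteq> {}"
    using sepE[OF assms(1)] by blast
  obtain \<N> :: "'a set set" where N: "countable \<N>" "cn_network_at \<N> 0"
    using assms(2) unfolding countable_cn_character_def by blast
  define \<M> where "\<M> = (\<lambda>(d,N). (\<lambda>n. d + n) ` N) ` (D \<times> \<N>)"
  have "countable \<M>" unfolding \<M>_def using D(1) N(1) by simp
  moreover have "is_network \<M>" unfolding is_network_def
  proof (intro allI impI)
    fix x :: 'a and U assume xU: "open U \<and> x \<in> U"
    define U' where "U' = {v. x + v \<in> U}"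
    have "open U'" unfolding U'_def using xU open_tr1 by blast
    moreover have "0 \<in> U'" using xU by (simp add: U'_def)
    ultimately obtain V where V: "open V" "0 \<in> V" "\<forall>a\<in>V. - a \<in> V"
      "\<forall>a\<in>V. \<forall>b\<in>V. \<forall>c\<in>V. \<forall>d\<in>V. a + b + c + d \<in> U'" using small by metis
    have "nbhd V 0" using V nbhd_open by blast
    hence "nbhd (\<Union>{N \<in> \<N>. 0 \<in> N \<and> N \<subseteq> V}) 0" using N(2) unfolding cn_network_at_def by blast
    then obtain T where T: "open T" "0 \<in> T" "T \<subseteq> \<Union>{N \<in> \<N>. 0 \<in> N \<and> N \<subseteq> V}" by (rule nbhdE)
    have "open {z. - z + x \<in> T}" using T(1) open_tr2 by blast
    moreover have "x \<in> {z. - z + x \<in> T}" using T(2) by simp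
    ultimately have "{z. - z + x \<in> T} \<inter> D \<noteq> {}" using D(2) by blast
    then obtain d where d: "d \<in> D" "- d + x \<in> T" by blast
    then obtain N where Nn: "N \<in> \<N>" "0 \<in> N" "N \<subseteq> V" "- d + x \<in> N" using T(3) by blast
    have "(\<lambda>n. d + n) ` N \<in> \<M>" unfolding \<M>_def using d(1) Nn(1) by force
    moreover have "x \<in> (\<lambda>n. d + n) ` N" using Nn(4) alg2[of d x] by (metis image_eqI)
    moreover have "(\<lambda>n. d + n) ` N \<subseteq> U"
    proof
      fix y assume "y \<in> (\<lambda>n. d + n) ` N"
      then obtain n where n: "n \<in> N" "y = d + n" by blast
      have "- (- d + x) \<in> V" "n \<in> V" using V(3) Nn n by auto
      hence "- (- d + x) + n + 0 + 0 \<in> U'" using V(2,4) by blast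
      thus "y \<in> U" unfolding U'_def using alg1[of x d n] n(2) by simp
    qed
    ultimately show "\<exists>N\<in>\<M>. x \<in> N \<and> N \<subseteq> U" by blast
  qed
  ultimately show ?thesis unfolding cosmic_def using regular_group by blast
qed


lemma tube:
  assumes "compact K" "open U" "K \<subseteq> U"
  shows "\<exists>V. open V \<and> (0::'a::topological_group_add) \<in> V \<and> (\<forall>k\<in>K. \<forall>v\<in>V. k + v \<in> U)"
proof -
  have "\<forall>k\<in>K. \<exists>V. open V \<and> 0 \<in> V \<and> (\<forall>a\<in>V. - a \<in> V) \<and>
     (\<forall>a\<in>V. \<forall>b\<in>V. \<forall>c\<in>V. \<forall>d\<in>V. a + b + c + d \<in> {v. k + v \<in> U})"
  proof
    fix k assume "k \<in> K"
    have "open {v. k + v \<in> U}" using assms(2) open_tr1 by blast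
    moreover have "0 \<in> {v. k + v \<in> U}" using \<open>k \<in> K\<close> assms(3) by auto
    ultimately show "\<exists>V. open V \<and> 0 \<in> V \<and> (\<forall>a\<in>V. - a \<in> V) \<and>
     (\<forall>a\<in>V. \<forall>b\<in>V. \<forall>c\<in>V. \<forall>d\<in>V. a + b + c + d \<in> {v. k + v \<in> U})" by (rule small)
  qed
  from bchoice[OF this] obtain Vf where Vf: "\<forall>k\<in>K. open (Vf k) \<and> 0 \<in> Vf k \<and> (\<forall>a\<in>Vf k. - a \<in> Vf k) \<and>
     (\<forall>a\<in>Vf k. \<forall>b\<in>Vf k. \<forall>c\<in>Vf k. \<forall>d\<in>Vf k. a + b + c + d \<in> {v. k + v \<in> U})"
    by (elim exE) (rule that)
  have Vo: "open (Vf k)" and V0: "0 \<in> Vf k" 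
    and V4: "\<forall>a\<in>Vf k. \<forall>b\<in>Vf k. \<forall>c\<in>Vf k. \<forall>d\<in>Vf k. a + b + c + d \<in> {v. k + v \<in> U}"
    if "k \<in> K" for k using Vf that by auto
  have "K \<subseteq> (\<Union>k\<in>K. {z. - k + z \<in> Vf k})"
  proof
    fix y assume "y \<in> K"
    hence "y \<in> {z. - y + z \<in> Vf y}" using V0 by simp
    thus "y \<in> (\<Union>k\<in>K. {z. - k + z \<in> Vf k})" using \<open>y \<in> K\<close> by blast
  qed
  moreover have "\<And>k. k \<in> K \<Longrightarrow> open {z. - k + z \<in> Vf k}" using Vo open_tr1 by blast
  ultimately obtain F where F: "F \<subseteq> K" "finite F" "K \<subseteq> (\<Union>k\<in>F. {z. - k + z \<in> Vf k})"
    using compactE_image[OF assms(1), of K "\<lambda>k. {z. - k + z \<in> Vf k}"] by blast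
  define V where "V = (\<Inter>k\<in>F. Vf k)"
  have "open V" unfolding V_def using F Vo by (intro open_INT) auto
  moreover have "0 \<in> V" unfolding V_def using F V0 by auto
  moreover have "\<forall>y\<in>K. \<forall>v\<in>V. y + v \<in> U"
  proof (intro ballI)
    fix y v assume "y \<in> K" "v \<in> V"
    then obtain k where k: "k \<in> F" "- k + y \<in> Vf k" using F(3) by blast
    have kK: "k \<in> K" using k F by blast
    have "v \<in> Vf k" using \<open>v \<in> V\<close> k unfolding V_def by blast
    have "(- k + y) + v + 0 + 0 \<in> {v. k + v \<in> U}" 
      by (rule V4[OF kK, rule_format, OF k(2) \<open>v \<in> Vf k\<close> V0[OF kK] V0[OF kK]])
    thus "y + v \<in> U" by (simp add: add.assoc[symmetric])
  qed
  ultimately show ?thesis by blast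
qed

lemma aleph0_fwd:
  assumes "aleph0_space TYPE('a::topological_space)"
  shows "separable_space (euclidean :: 'a topology) \<and> countable_ck_character TYPE('a)"
proof -
  obtain \<N> :: "'a set set" where N: "countable \<N>" "is_k_network \<N>"
    using assms unfolding aleph0_space_def by blast
  have kn: "\<exists>\<F>. finite \<F> \<and> \<F> \<subseteq> \<N> \<and> K \<subseteq> \<Union>\<F> \<and> \<Union>\<F> \<subseteq> U"
    if "compact K" "open U" "K \<subseteq> U" for K U
    using N(2)[unfolded is_k_network_def, rule_format, of K U] that by simp
  have net: "is_network \<N>" unfolding is_network_def
  proof (intro allI impI)
    fix x :: 'a and U assume xU: "open U \<and> x \<in> U"
    have "open U" "{x} \<subseteq> U" using xU by auto
    have "\<exists>\<F>. finite \<F> \<and> \<F> \<subseteq> \<N> \<and> {x} \<subseteq> \<Union>\<F> \<and> \<Union>\<F> \<subseteq> U"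
      by (rule kn[OF compact_sing \<open>open U\<close> \<open>{x} \<subseteq> U\<close>])
    then obtain \<F> where F: "finite \<F>" "\<F> \<subseteq> \<N>" "{x} \<subseteq> \<Union>\<F>" "\<Union>\<F> \<subseteq> U"
      by blast
    then obtain N where "N \<in> \<F>" "x \<in> N" by blast
    hence "N \<in> \<N>" "x \<in> N" "N \<subseteq> U" using F by auto
    thus "\<exists>N\<in>\<N>. x \<in> N \<and> N \<subseteq> U" by blast
  qed
  have "countable_ck_character TYPE('a)"
    unfolding countable_ck_character_def
  proof
    fix x :: 'a
    define \<M> where "\<M> = insert x ` \<N>"
    have "countable \<M>" unfolding \<M>_def using N(1) by simp
    moreover have "ck_network_at \<M> x" unfolding ck_network_at_def
    proof (intro allI impI)
      fix O' assume "nbhd O' x"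
      then obtain U where U: "open U" "x \<in> U" "U \<subseteq> O'" by (rule nbhdE)
      have main: "\<exists>\<F>. finite \<F> \<and> \<F> \<subseteq> \<M> \<and> x \<in> \<Inter>\<F> \<and> K \<subseteq> \<Union>\<F> \<and> \<Union>\<F> \<subseteq> O'"
        if "compact K" "K \<subseteq> U" for K
      proof -
        have "\<exists>\<F>. finite \<F> \<and> \<F> \<subseteq> \<N> \<and> K \<subseteq> \<Union>\<F> \<and> \<Union>\<F> \<subseteq> U"
          by (rule kn[OF \<open>compact K\<close> U(1) \<open>K \<subseteq> U\<close>])
        then obtain \<F> where F: "finite \<F>" "\<F> \<subseteq> \<N>" "K \<subseteq> \<Union>\<F>" "\<Union>\<F> \<subseteq> U"
          by (elim exE conjE)
        have f1: "finite (insert x ` \<F>)" using F(1) by simp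
        have f2: "insert x ` \<F> \<subseteq> \<M>" using F(2) unfolding \<M>_def by blast
        have f3: "x \<in> \<Inter>(insert x ` \<F>)" by blast
        have f4: "K \<subseteq> \<Union>(insert x ` \<F>)" using F(3) by blast
        have f5: "\<Union>(insert x ` \<F>) \<subseteq> O'" using F(4) U by blast
        show ?thesis
          apply (rule exI[of _ "insert x ` \<F>"])
          using f1 f2 f3 f4 f5 by simp
      qed
      show "\<exists>U. nbhd U x \<and> (\<forall>K. compact K \<and> K \<subseteq> U \<longrightarrow>
        (\<exists>\<F>. finite \<F> \<and> \<F> \<subseteq> \<M> \<and> x \<in> \<Inter>\<F> \<and> K \<subseteq> \<Union>\<F> \<and> \<Union>\<F> \<subseteq> O'))"
      proof (intro exI[of _ U] conjI allI impI)
        show "nbhd U x" using U nbhd_open by blast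
      next
        fix K assume "compact K \<and> K \<subseteq> U"
        thus "\<exists>\<F>. finite \<F> \<and> \<F> \<subseteq> \<M> \<and> x \<in> \<Inter>\<F> \<and> K \<subseteq> \<Union>\<F> \<and> \<Union>\<F> \<subseteq> O'"
          by (intro main) auto
      qed
    qed
    ultimately show "\<exists>\<M>. countable \<M> \<and> ck_network_at \<M> x" by blast
  qed
  thus ?thesis using sep_of_network N(1) net by blast
qed


lemma aleph0_bwd:
  assumes "separable_space (euclidean :: 'a::topological_group_add topology)"
    and "countable_ck_character TYPE('a)"
  shows "aleph0_space TYPE('a)"
proof -
  have "\<exists>D::'a set. countable D \<and> (\<forall>T. open T \<longrightarrow> T \<noteq> {} \<longrightarrow> T \<inter> D \<noteq> {})"
    by (rule sepE[OF assms(1)])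
  then obtain D :: "'a set" where D: "countable D" "\<forall>T. open T \<longrightarrow> T \<noteq> {} \<longrightarrow> T \<inter> D \<noteq> {}"
    by (elim exE conjE)
  have "\<exists>\<N>. countable \<N> \<and> ck_network_at \<N> (0::'a)"
    using assms(2) unfolding countable_ck_character_def by simp
  then obtain \<N> :: "'a set set" where N: "countable \<N>" "ck_network_at \<N> 0"
    by (elim exE conjE)
  define \<M> where "\<M> = (\<lambda>(d,N). (\<lambda>n. d + n) ` N) ` (D \<times> \<N>)"
  have "countable \<M>" unfolding \<M>_def using D(1) N(1) by simp
  moreover have "is_k_network \<M>" unfolding is_k_network_def
  proof (intro allI impI)
    fix K U :: "'a set" assume KU: "compact K \<and> open U \<and> K \<subseteq> U"
    have cK: "compact K" using KU by simp
    have "\<exists>V. open V \<and> (0::'a) \<in> V \<and> (\<forall>k\<in>K. \<forall>v\<in>V. k + v \<in> U)"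
      by (rule tube) (use KU in auto)
    then obtain V where V: "open V" "0 \<in> V" "\<forall>k\<in>K. \<forall>v\<in>V. k + v \<in> U" by (elim exE conjE)
    have "\<exists>V1. open V1 \<and> 0 \<in> V1 \<and> (\<forall>a\<in>V1. - a \<in> V1) \<and>
      (\<forall>a\<in>V1. \<forall>b\<in>V1. \<forall>c\<in>V1. \<forall>d\<in>V1. a + b + c + d \<in> V)" by (rule small[OF V(1,2)])
    then obtain V1 where V1: "open V1" "0 \<in> V1" "\<forall>a\<in>V1. - a \<in> V1"
      "\<forall>a\<in>V1. \<forall>b\<in>V1. \<forall>c\<in>V1. \<forall>d\<in>V1. a + b + c + d \<in> V" by (elim exE conjE)
    have "\<exists>W. nbhd W 0 \<and> (\<forall>C. compact C \<and> C \<subseteq> W \<longrightarrow>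
        (\<exists>\<F>. finite \<F> \<and> \<F> \<subseteq> \<N> \<and> 0 \<in> \<Inter>\<F> \<and> C \<subseteq> \<Union>\<F> \<and> \<Union>\<F> \<subseteq> V1))"
      using N(2)[unfolded ck_network_at_def, rule_format, OF nbhd_open[OF V1(1,2)]] .
    then obtain W where W: "nbhd W 0" and Wc: "\<forall>C. compact C \<and> C \<subseteq> W \<longrightarrow>
        (\<exists>\<F>. finite \<F> \<and> \<F> \<subseteq> \<N> \<and> 0 \<in> \<Inter>\<F> \<and> C \<subseteq> \<Union>\<F> \<and> \<Union>\<F> \<subseteq> V1)"
      by (elim exE conjE)
    obtain W0 where W0: "open W0" "0 \<in> W0" "W0 \<subseteq> W" using W by (rule nbhdE)
    have "\<exists>W1. open W1 \<and> 0 \<in> W1 \<and> (\<forall>a\<in>W1. - a \<in> W1) \<and>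
      (\<forall>a\<in>W1. \<forall>b\<in>W1. \<forall>c\<in>W1. \<forall>d\<in>W1. a + b + c + d \<in> W0 \<inter> V1)"
      by (rule small) (use W0 V1 in auto)
    then obtain W1 where W1: "open W1" "0 \<in> W1" "\<forall>a\<in>W1. - a \<in> W1"
      "\<forall>a\<in>W1. \<forall>b\<in>W1. \<forall>c\<in>W1. \<forall>d\<in>W1. a + b + c + d \<in> W0 \<inter> V1" by (elim exE conjE)
    have W1sub: "a \<in> W0 \<inter> V1" if "a \<in> W1" for a
      using W1(4)[rule_format, OF that W1(2) W1(2) W1(2)] by simp
    define S where "S d = {z. - d + z \<in> W1}" for d
    have oS: "open (S d)" for d unfolding S_def using W1(1) open_tr1 by blast
    have cov: "K \<subseteq> (\<Union>d\<in>D. S d)"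
    proof
      fix z assume "z \<in> K"
      have "open {d. - d + z \<in> W1}" using W1(1) open_tr2 by blast
      moreover have "z \<in> {d. - d + z \<in> W1}" using W1(2) by simp
      ultimately have "{d. - d + z \<in> W1} \<inter> D \<noteq> {}" using D(2) by blast
      then obtain d where "d \<in> D" "- d + z \<in> W1" by blast
      thus "z \<in> (\<Union>d\<in>D. S d)" unfolding S_def by blast
    qed
    obtain F where F: "F \<subseteq> D" "finite F" "K \<subseteq> (\<Union>d\<in>F. S d)"
      using compactE_image[OF cK, of D S] oS cov by blast
    define F' where "F' = {d\<in>F. \<exists>k\<in>K. - d + k \<in> W1}"
    have cl: "- d + z \<in> W0 \<inter> V1" if "z \<in> closure (S d)" for d z
    proof -
      have "open {y. - z + y \<in> W1}" using W1(1) open_tr1 by blast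
      moreover have "z \<in> {y. - z + y \<in> W1}" using W1(2) by simp
      ultimately have "{y. - z + y \<in> W1} \<inter> S d \<noteq> {}" using that unfolding closure_char by blast
      then obtain y where y: "- z + y \<in> W1" "- d + y \<in> W1" unfolding S_def by blast
      have "- (- z + y) \<in> W1" using W1(3) y(1) by blast
      hence "(- d + y) + - (- z + y) + 0 + 0 \<in> W0 \<inter> V1" using W1(4) y(2) W1(2) by blast
      moreover have "(- d + y) + - (- z + y) + 0 + 0 = - d + z" by (simp add: minus_add add.assoc)
      ultimately show ?thesis by simp
    qed
    have "\<forall>d\<in>F'. \<exists>\<F>. finite \<F> \<and> \<F> \<subseteq> \<N> \<and> 0 \<in> \<Inter>\<F> \<and>
        (\<lambda>z. - d + z) ` (K \<inter> closure (S d)) \<subseteq> \<Union>\<F> \<and> \<Union>\<F> \<subseteq> V1"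
    proof
      fix d assume "d \<in> F'"
      have "compact (K \<inter> closure (S d))" using cK by (intro compact_Int_closed) auto
      moreover have "continuous_on (K \<inter> closure (S d)) (\<lambda>z. - d + z)" by (intro continuous_intros)
      ultimately have "compact ((\<lambda>z. - d + z) ` (K \<inter> closure (S d)))"
        by (rule compact_continuous_image[rotated])
      moreover have "(\<lambda>z. - d + z) ` (K \<inter> closure (S d)) \<subseteq> W" using cl W0(3) by blast
      ultimately show "\<exists>\<F>. finite \<F> \<and> \<F> \<subseteq> \<N> \<and> 0 \<in> \<Inter>\<F> \<and>
        (\<lambda>z. - d + z) ` (K \<inter> closure (S d)) \<subseteq> \<Union>\<F> \<and> \<Union>\<F> \<subseteq> V1"
        using Wc by simp
    qed
    from bchoice[OF this] obtain Ff where Ff: "\<forall>d\<in>F'. finite (Ff d) \<and> Ff d \<subseteq> \<N> \<and> 0 \<in> \<Inter>(Ff d) \<and>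
        (\<lambda>z. - d + z) ` (K \<inter> closure (S d)) \<subseteq> \<Union>(Ff d) \<and> \<Union>(Ff d) \<subseteq> V1"
      by (elim exE)
    define \<G> where "\<G> = (\<Union>d\<in>F'. (\<lambda>N. (\<lambda>n. d + n) ` N) ` Ff d)"
    have fF': "finite F'" using F(2) unfolding F'_def by simp
    have g1: "finite \<G>" unfolding \<G>_def using fF' Ff by auto
    have g2: "\<G> \<subseteq> \<M>"
    proof
      fix G assume "G \<in> \<G>"
      then obtain d N where dN: "d \<in> F'" "N \<in> Ff d" "G = (\<lambda>n. d + n) ` N" unfolding \<G>_def by blast
      have "d \<in> D" using dN(1) F(1) unfolding F'_def by blast
      moreover have "N \<in> \<N>" using dN(1,2) Ff by blast
      ultimately show "G \<in> \<M>" unfolding \<M>_def dN(3) by force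
    qed
    have g3: "K \<subseteq> \<Union>\<G>"
    proof
      fix z assume "z \<in> K"
      then obtain d where d: "d \<in> F" "z \<in> S d" using F(3) by blast
      have dF': "d \<in> F'" using d \<open>z \<in> K\<close> unfolding F'_def S_def by blast
      have "z \<in> closure (S d)" using d(2) closure_subset by blast
      hence "- d + z \<in> (\<lambda>z. - d + z) ` (K \<inter> closure (S d))" using \<open>z \<in> K\<close> by blast
      hence "- d + z \<in> \<Union>(Ff d)" using Ff dF' by blast
      then obtain N where N: "N \<in> Ff d" "- d + z \<in> N" by blast
      have "z \<in> (\<lambda>n. d + n) ` N" using N(2) alg2[of d z] by (metis image_eqI)
      moreover have "(\<lambda>n. d + n) ` N \<in> \<G>" unfolding \<G>_def using dF' N(1) by blast
      ultimately show "z \<in> \<Union>\<G>" by blast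
    qed
    have g4: "\<Union>\<G> \<subseteq> U"
    proof
      fix y assume "y \<in> \<Union>\<G>"
      then obtain d N where dN: "d \<in> F'" "N \<in> Ff d" "y \<in> (\<lambda>n. d + n) ` N" unfolding \<G>_def by blast
      then obtain n where n: "n \<in> N" "y = d + n" by blast
      obtain k where k: "k \<in> K" "- d + k \<in> W1" using dN(1) unfolding F'_def by blast
      have "n \<in> V1" using n(1) dN(1,2) Ff by blast
      moreover have "- (- d + k) \<in> V1" using W1(3) k(2) W1sub by blast
      ultimately have "- (- d + k) + n + 0 + 0 \<in> V" using V1(2,4) by blast
      hence "k + (- (- d + k) + n + 0 + 0) \<in> U" using V(3) k(1) by blast
      thus "y \<in> U" using alg1[of k d n] n(2) by simp
    qed
    show "\<exists>\<F>. finite \<F> \<and> \<F> \<subseteq> \<M> \<and> K \<subseteq> \<Union>\<F> \<and> \<Union>\<F> \<subseteq> U"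
      apply (rule exI[of _ \<G>]) using g1 g2 g3 g4 by simp
  qed
  ultimately show ?thesis unfolding aleph0_space_def using regular_group by blast
qed


lemma P0_fwd:
  assumes "P0_space TYPE('a::topological_space)"
  shows "separable_space (euclidean :: 'a topology) \<and> countable_cp_character TYPE('a)"
proof -
  have "\<exists>\<N> :: 'a set set. countable \<N> \<and> (\<forall>x. cp_network_at \<N> x)"
    using assms unfolding P0_space_def by simp
  then obtain \<N> :: "'a set set" where N: "countable \<N>" "\<forall>x. cp_network_at \<N> x"
    by (elim exE conjE)
  have net: "is_network \<N>" unfolding is_network_def
  proof (intro allI impI)
    fix x :: 'a and U assume xU: "open U \<and> x \<in> U"
    hence "nbhd U x" using nbhd_open by blast
    thus "\<exists>N\<in>\<N>. x \<in> N \<and> N \<subseteq> U" using N(2) unfolding cp_network_at_def by blast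
  qed
  have "countable_cp_character TYPE('a)"
    unfolding countable_cp_character_def
  proof
    fix x :: 'a
    show "\<exists>\<M>. countable \<M> \<and> cp_network_at \<M> x"
      by (rule exI[of _ \<N>]) (use N in simp)
  qed
  thus ?thesis using sep_of_network N(1) net by blast
qed

lemma cp_core:
  assumes "open U" "(x::'a::topological_group_add) \<in> U"
  shows "\<exists>V. open V \<and> 0 \<in> V \<and> (\<forall>d n2 n1. - d + x \<in> V \<longrightarrow> n2 \<in> V \<longrightarrow> n1 \<in> V \<longrightarrow> d + n2 + n1 \<in> U)"
proof -
  have "open {v. x + v \<in> U}" using assms(1) open_tr1 by blast
  moreover have "0 \<in> {v. x + v \<in> U}" using assms(2) by simp
  ultimately have "\<exists>V. open V \<and> 0 \<in> V \<and> (\<forall>a\<in>V. - a \<in> V) \<and>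
      (\<forall>a\<in>V. \<forall>b\<in>V. \<forall>c\<in>V. \<forall>d\<in>V. a + b + c + d \<in> {v. x + v \<in> U})" by (rule small)
  then obtain V where V: "open V" "0 \<in> V" "\<forall>a\<in>V. - a \<in> V"
      "\<forall>a\<in>V. \<forall>b\<in>V. \<forall>c\<in>V. \<forall>d\<in>V. a + b + c + d \<in> {v. x + v \<in> U}" by (elim exE conjE)
  have "d + n2 + n1 \<in> U" if "- d + x \<in> V" "n2 \<in> V" "n1 \<in> V" for d n2 n1
  proof -
    have "- (- d + x) \<in> V" using V(3) that(1) by blast
    hence "- (- d + x) + n2 + n1 + 0 \<in> {v. x + v \<in> U}" using V(4) that V(2) by blast
    moreover have "x + (- (- d + x) + n2 + n1 + 0) = d + n2 + n1" by (simp add: minus_add add.assoc)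
    ultimately show ?thesis by simp
  qed
  thus ?thesis using V(1,2) by blast
qed

lemma P0_bwd:
  assumes "separable_space (euclidean :: 'a::topological_group_add topology)"
    and "countable_cp_character TYPE('a)"
  shows "P0_space TYPE('a)"
proof -
  have "\<exists>D::'a set. countable D \<and> (\<forall>T. open T \<longrightarrow> T \<noteq> {} \<longrightarrow> T \<inter> D \<noteq> {})"
    by (rule sepE[OF assms(1)])
  then obtain D :: "'a set" where D: "countable D" "\<forall>T. open T \<longrightarrow> T \<noteq> {} \<longrightarrow> T \<inter> D \<noteq> {}"
    by (elim exE conjE)
  have "\<exists>\<N>. countable \<N> \<and> cp_network_at \<N> (0::'a)"
    using assms(2) unfolding countable_cp_character_def by simp
  then obtain \<N> :: "'a set set" where N: "countable \<N>" "cp_network_at \<N> 0"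
    by (elim exE conjE)
  have c1: "\<exists>N\<in>\<N>. 0 \<in> N \<and> N \<subseteq> V" if "open V" "0 \<in> V" for V
    using N(2)[unfolded cp_network_at_def, THEN conjunct1, rule_format, OF nbhd_open[OF that]] .
  have c2: "\<exists>N\<in>\<N>. 0 \<in> N \<and> N \<subseteq> V \<and> infinite (N \<inter> A)"
    if "open V" "0 \<in> V" "0 \<in> closure A" "0 \<notin> A" for V A
  proof -
    have "0 \<in> closure A - A \<and> nbhd V 0" using nbhd_open[OF that(1,2)] that(3,4) by simp
    thus ?thesis by (rule N(2)[unfolded cp_network_at_def, THEN conjunct2, rule_format])
  qed
  have NW: "\<exists>d\<in>D. \<exists>N\<in>\<N>. 0 \<in> N \<and> N \<subseteq> V \<and> - d + x \<in> N" if V: "open V" "0 \<in> V" for V x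
  proof (cases "x \<in> D")
    case True
    have "\<exists>N\<in>\<N>. 0 \<in> N \<and> N \<subseteq> V" by (rule c1[OF V])
    then obtain N where N: "N \<in> \<N>" "0 \<in> N" "N \<subseteq> V" by (elim bexE conjE)
    have "- x + x \<in> N" using N(2) by simp
    show ?thesis
    proof (rule bexI[OF _ True], rule bexI[OF _ N(1)])
      show "0 \<in> N \<and> N \<subseteq> V \<and> - x + x \<in> N" using N(2,3) by simp
    qed
  next
    case False
    define A where "A = (\<lambda>d. - d + x) ` D"
    have "0 \<notin> A" unfolding A_def
    proof (rule notI, erule imageE)
      fix d assume d: "0 = - d + x" "d \<in> D"
      have "x = d + (- d + x)" by (simp add: add.assoc[symmetric])
      also have "\<dots> = d" using d(1) by simp
      finally show False using False d(2) by simp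
    qed
    moreover have "0 \<in> closure A" unfolding closure_char
    proof (intro allI impI)
      fix T assume "open (T::'a set)" "0 \<in> T"
      have "open {d. - d + x \<in> T}" using \<open>open T\<close> open_tr2 by blast
      moreover have "x \<in> {d. - d + x \<in> T}" using \<open>0 \<in> T\<close> by simp
      ultimately have "{d. - d + x \<in> T} \<inter> D \<noteq> {}" using D(2) by blast
      thus "T \<inter> A \<noteq> {}" unfolding A_def by blast
    qed
    ultimately have "\<exists>N\<in>\<N>. 0 \<in> N \<and> N \<subseteq> V \<and> infinite (N \<inter> A)" 
      by (intro c2[OF V])
    then obtain N where N: "N \<in> \<N>" "0 \<in> N" "N \<subseteq> V" "infinite (N \<inter> A)"
      by (elim bexE conjE)
    have "N \<inter> A \<noteq> {}" using N(4) by (intro notI) simp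
    then obtain a where a: "a \<in> N" "a \<in> A" by blast
    then obtain d where d: "d \<in> D" "a = - d + x" unfolding A_def by blast
    show ?thesis
    proof (rule bexI[OF _ d(1)], rule bexI[OF _ N(1)])
      show "0 \<in> N \<and> N \<subseteq> V \<and> - d + x \<in> N" using N(2,3) a(1) d(2) by simp
    qed
  qed
  define \<M> where "\<M> = (\<lambda>(d,N2,N1). (\<lambda>(a,b). d + a + b) ` (N2 \<times> N1)) ` (D \<times> \<N> \<times> \<N>)"
  have inM: "(\<lambda>(a,b). d + a + b) ` (N2 \<times> N1) \<in> \<M>" if "d \<in> D" "N2 \<in> \<N>" "N1 \<in> \<N>" for d N2 N1
    unfolding \<M>_def using that by force
  have "countable \<M>" unfolding \<M>_def using D(1) N(1) by simp
  moreover have "\<forall>x. cp_network_at \<M> x"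
  proof
    fix x :: 'a
    have stp: "\<exists>V d N2. open V \<and> 0 \<in> V \<and> d \<in> D \<and> N2 \<in> \<N> \<and> - d + x \<in> N2 \<and>
         (\<forall>N1. N1 \<subseteq> V \<longrightarrow> (\<lambda>(a,b). d + a + b) ` (N2 \<times> N1) \<subseteq> Oo) \<and>
         (\<forall>N1. 0 \<in> N1 \<longrightarrow> x \<in> (\<lambda>(a,b). d + a + b) ` (N2 \<times> N1))"
      if nb: "nbhd Oo x" for Oo
    proof -
      obtain U where U: "open U" "x \<in> U" "U \<subseteq> Oo" using nb by (rule nbhdE)
      have "\<exists>V. open V \<and> 0 \<in> V \<and> (\<forall>d n2 n1. - d + x \<in> V \<longrightarrow> n2 \<in> V \<longrightarrow> n1 \<in> V \<longrightarrow> d + n2 + n1 \<in> U)"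
        by (rule cp_core[OF U(1,2)])
      then obtain V where V: "open V" "0 \<in> V" "\<forall>d n2 n1. - d + x \<in> V \<longrightarrow> n2 \<in> V \<longrightarrow> n1 \<in> V \<longrightarrow> d + n2 + n1 \<in> U"
        by (elim exE conjE)
      obtain d N2 where dN: "d \<in> D" "N2 \<in> \<N>" "0 \<in> N2" "N2 \<subseteq> V" "- d + x \<in> N2"
        using NW[OF V(1,2), of x] by blast
      have s1: "(\<lambda>(a,b). d + a + b) ` (N2 \<times> N1) \<subseteq> Oo" if "N1 \<subseteq> V" for N1
      proof
        fix y assume "y \<in> (\<lambda>(a,b). d + a + b) ` (N2 \<times> N1)"
        then obtain a b where ab: "a \<in> N2" "b \<in> N1" "y = d + a + b" by force
        have "d + a + b \<in> U" using V(3) dN(4,5) ab(1,2) that by blast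
        thus "y \<in> Oo" using ab(3) U(3) by blast
      qed
      have s2: "x \<in> (\<lambda>(a,b). d + a + b) ` (N2 \<times> N1)" if "0 \<in> N1" for N1
      proof -
        have "x = (\<lambda>(a,b). d + a + b) (- d + x, 0)" by (simp add: add.assoc[symmetric])
        moreover have "(- d + x, 0) \<in> N2 \<times> N1" using dN(5) that by simp
        ultimately show ?thesis by (rule image_eqI)
      qed
      show ?thesis
        apply (rule exI[of _ V], rule exI[of _ d], rule exI[of _ N2])
        using V(1,2) dN s1 s2 by simp
    qed
    show "cp_network_at \<M> x" unfolding cp_network_at_def
    proof (intro conjI allI impI)
      fix O' assume "nbhd O' x"
      from stp[OF this] obtain V d N2 where s: "open V" "0 \<in> V" "d \<in> D" "N2 \<in> \<N>" "- d + x \<in> N2"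
         "\<forall>N1. N1 \<subseteq> V \<longrightarrow> (\<lambda>(a,b). d + a + b) ` (N2 \<times> N1) \<subseteq> O'"
         "\<forall>N1. 0 \<in> N1 \<longrightarrow> x \<in> (\<lambda>(a,b). d + a + b) ` (N2 \<times> N1)" by (elim exE conjE)
      have "\<exists>N\<in>\<N>. 0 \<in> N \<and> N \<subseteq> V" by (rule c1[OF s(1,2)])
      then obtain N1 where N1: "N1 \<in> \<N>" "0 \<in> N1" "N1 \<subseteq> V" by (elim bexE conjE)
      define S where "S = (\<lambda>(a,b). d + a + b) ` (N2 \<times> N1)"
      have "S \<in> \<M>" unfolding S_def by (rule inM[OF s(3,4) N1(1)])
      moreover have "x \<in> S" unfolding S_def using s(7) N1(2) by simp
      moreover have "S \<subseteq> O'" unfolding S_def using s(6) N1(3) by simp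
      ultimately show "\<exists>N\<in>\<M>. x \<in> N \<and> N \<subseteq> O'" by (intro bexI[of _ S] conjI)
    next
      fix A O' assume H: "x \<in> closure A - A \<and> nbhd O' x"
      hence "nbhd O' x" by simp
      from stp[OF this] obtain V d N2 where s: "open V" "0 \<in> V" "d \<in> D" "N2 \<in> \<N>" "- d + x \<in> N2"
         "\<forall>N1. N1 \<subseteq> V \<longrightarrow> (\<lambda>(a,b). d + a + b) ` (N2 \<times> N1) \<subseteq> O'"
         "\<forall>N1. 0 \<in> N1 \<longrightarrow> x \<in> (\<lambda>(a,b). d + a + b) ` (N2 \<times> N1)" by (elim exE conjE)
      define B where "B = (\<lambda>a. - x + a) ` A"
      have "0 \<notin> B" unfolding B_def
      proof (rule notI, erule imageE)
        fix a assume a: "0 = - x + a" "a \<in> A"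
        have "a = x + (- x + a)" by (simp add: add.assoc[symmetric])
        also have "\<dots> = x" using a(1) by simp
        finally show False using H a(2) by simp
      qed
      moreover have "0 \<in> closure B" unfolding closure_char
      proof (intro allI impI)
        fix T assume "open (T::'a set)" "0 \<in> T"
        have "open {y. - x + y \<in> T}" using \<open>open T\<close> open_tr1 by blast
        moreover have "x \<in> {y. - x + y \<in> T}" using \<open>0 \<in> T\<close> by simp
        moreover have xcl: "x \<in> closure A" using H by simp
        ultimately have "{y. - x + y \<in> T} \<inter> A \<noteq> {}" unfolding closure_char by blast
        then obtain a where "a \<in> A" "- x + a \<in> T" by blast
        hence "- x + a \<in> T \<inter> B" unfolding B_def by blast
        thus "T \<inter> B \<noteq> {}" by blast
      qed
      ultimately have "\<exists>N\<in>\<N>. 0 \<in> N \<and> N \<subseteq> V \<and> infinite (N \<inter> B)" by (intro c2[OF s(1,2)])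
      then obtain N1 where N1: "N1 \<in> \<N>" "0 \<in> N1" "N1 \<subseteq> V" "infinite (N1 \<inter> B)"
        by (elim bexE conjE)
      define S where "S = (\<lambda>(a,b). d + a + b) ` (N2 \<times> N1)"
      have "S \<in> \<M>" unfolding S_def by (rule inM[OF s(3,4) N1(1)])
      moreover have "x \<in> S" unfolding S_def using s(7) N1(2) by simp
      moreover have "S \<subseteq> O'" unfolding S_def using s(6) N1(3) by simp
      moreover have "infinite (S \<inter> A)"
      proof
        assume fin: "finite (S \<inter> A)"
        have sub: "(\<lambda>b. x + b) ` (N1 \<inter> B) \<subseteq> S \<inter> A"
        proof
          fix y assume "y \<in> (\<lambda>b. x + b) ` (N1 \<inter> B)"
          then obtain b where b: "b \<in> N1 \<inter> B" "y = x + b" by (rule imageE) simp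
          from b(1) have "b \<in> B" by simp
          then obtain a where a: "b = - x + a" "a \<in> A" unfolding B_def by (rule imageE)
          have "y = a" using b(2) a(1) by (simp add: add.assoc[symmetric])
          hence "y \<in> A" using a(2) by simp
          moreover have "y = (\<lambda>(a,b). d + a + b) (- d + x, b)" using b(2) by (simp add: add.assoc[symmetric])
          moreover have "(- d + x, b) \<in> N2 \<times> N1" using s(5) b(1) by simp
          ultimately show "y \<in> S \<inter> A" unfolding S_def by (metis IntI image_eqI)
        qed
        have "finite ((\<lambda>b. x + b) ` (N1 \<inter> B))" using finite_subset[OF sub fin] .
        moreover have "inj_on (\<lambda>b. x + b) (N1 \<inter> B)" by (simp add: inj_on_def)
        ultimately have "finite (N1 \<inter> B)" by (rule finite_imageD)
        thus False using N1(4) by simp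
      qed
      ultimately show "\<exists>N\<in>\<M>. x \<in> N \<and> N \<subseteq> O' \<and> infinite (N \<inter> A)" by (intro bexI[of _ S] conjI)
    qed
  qed
  ultimately show ?thesis unfolding P0_space_def using regular_group by blast
qed


theorem mainTheorem1:
  shows "(cosmic TYPE('a::{topological_group_add, t2_space}) \<longleftrightarrow>
            separable_space (euclidean :: 'a topology) \<and> countable_cn_character TYPE('a))
       \<and> (aleph0_space TYPE('a) \<longleftrightarrow>
            separable_space (euclidean :: 'a topology) \<and> countable_ck_character TYPE('a))
       \<and> (P0_space TYPE('a) \<longleftrightarrow>
            separable_space (euclidean :: 'a topology) \<and> countable_cp_character TYPE('a))"
  using cosmic_fwd[where 'a='a] cosmic_bwd[where 'a='a] aleph0_fwd[where 'a='a] aleph0_bwd[where 'a='a]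
    P0_fwd[where 'a='a] P0_bwd[where 'a='a] by blast

end
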